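(* Let $u\in(0,1)$ and $w\in(0,1]$. For $R>1$ let $$\varphi_R(p)=2(1-uR)w\,p^2+\big(uw(R+1)-2u-2w\big)p+u .$$ Since $\varphi_R(0)=u>0$ and $\varphi_R(1)=-u(1-w+Rw)<0$, this polynomial has a unique root in $[0,1]$; call it $p(R)$. Then $R\mapsto p(R)$ is strictly increasing on $(1,\infty)$, and $p(R)\uparrow 1/2$ as $R\to\infty$.
   Context: $p(R)$ is the fraction of cooperators at any non-zero metastable equilibrium of a population playing a public goods game. In that game $u$ is the mutation rate, $w$ is the cost of cooperation, and $R$ is the multiplication factor. *)

theory Defs
  imports Complex_Main
begin

definition phi :: "real \<Rightarrow> real \<Rightarrow> real \<Rightarrow> real \<Rightarrow> real" where
  "phi u w R p = 2 * (1 - u * R) * w * p ^ 2 + (u * w * (R + 1) - 2 * u - 2 * w) * p + u"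

definition proot :: "real \<Rightarrow> real \<Rightarrow> real \<Rightarrow> real" where
  "proot u w R = (THE p. p \<in> {0..1} \<and> phi u w R p = 0)"

end

theory Submission
  imports Defs
begin

lemma phi_split: "phi u w R p = (2*w*p^2 + (u*w - 2*u - 2*w)*p + u) + R * (u*w*p*(1-2*p))"
  unfolding phi_def by (simp add: algebra_simps power2_eq_square)

lemma phi_half: "phi u w R (1/2) = - w*(1-u)/2"
  unfolding phi_def by (simp add: algebra_simps power2_eq_square)

lemma phi_cont: "continuous_on S (phi u w R)"
  unfolding phi_def by (intro continuous_intros)

lemma phi_uniq:
  assumes "0 < u" "u < 1" "0 < w" "w \<le> 1" "R > 1"
    and x: "x \<in> {0..1}" "phi u w R x = 0" and y: "y \<in> {0..1}" "phi u w R y = 0"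
  shows "x = y"
proof (rule ccontr)
  assume ne: "x \<noteq> y"
  define a where "a = 2 * (1 - u * R) * w"
  define b where "b = u * w * (R + 1) - 2 * u - 2 * w"
  have ex: "a*x^2 + b*x + u = 0" using x unfolding phi_def a_def b_def by simp
  have ey: "a*y^2 + b*y + u = 0" using y unfolding phi_def a_def b_def by simp
  have "(x - y) * (a*(x+y) + b) = 0" using ex ey by (simp add: algebra_simps power2_eq_square)
  hence ab: "a*(x+y) + b = 0" using ne by simp
  hence bb: "b = -a*(x+y)" by simp
  have "u = -(a*x^2) - b*x" using ex by simp
  hence c: "u = a*x*y" unfolding bb by (simp add: algebra_simps power2_eq_square)
  have p1: "a + b + u = a*(1-x)*(1-y)" using ab c by (simp add: algebra_simps)
  have "a + b + u = - u*(1 - w + R*w)" unfolding a_def b_def by (simp add: algebra_simps)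
  moreover have "u*(1 - w + R*w) > 0" proof -
    have "R*w > 0" using assms by simp
    hence "1 - w + R*w > 0" using assms by linarith
    thus ?thesis using assms by simp
  qed
  ultimately have neg: "a*(1-x)*(1-y) < 0" using p1 by simp
  have "a*x*y * (a*(1-x)*(1-y)) = a^2 * (x*y*((1-x)*(1-y)))" by (simp add: algebra_simps power2_eq_square)
  also have "\<dots> \<ge> 0" using x y by (intro mult_nonneg_nonneg) auto
  finally have "a*x*y * (a*(1-x)*(1-y)) \<ge> 0" .
  moreover have "a*x*y > 0" using c assms by simp
  ultimately have "a*x*y * (a*(1-x)*(1-y)) < 0" using neg by (simp add: mult_pos_neg)
  thus False using \<open>a*x*y * (a*(1-x)*(1-y)) \<ge> 0\<close> by linarith
qed

lemma phi_exists_between: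
  assumes "0 < u" "u < 1" "0 < w" "q \<le> 1/2" "phi u w R q \<ge> 0"
  shows "\<exists>p. q \<le> p \<and> p \<le> 1/2 \<and> phi u w R p = 0"
proof -
  have "phi u w R (1/2) \<le> 0" using assms unfolding phi_half
    by (simp add: divide_nonpos_pos mult_pos_pos)
  thus ?thesis using IVT2'[of "phi u w R" "1/2" 0 q] assms phi_cont by auto
qed

lemma proot_props:
  assumes "0 < u" "u < 1" "0 < w" "w \<le> 1" "R > 1"
  shows "proot u w R \<in> {0..1} \<and> phi u w R (proot u w R) = 0 \<and> 0 < proot u w R \<and> proot u w R < 1/2"
proof -
  have "phi u w R 0 = u" unfolding phi_def by simp
  then obtain p where p: "0 \<le> p" "p \<le> 1/2" "phi u w R p = 0"
    using phi_exists_between[of u w 0 R] assms by auto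
  have eq: "proot u w R = p" unfolding proot_def
    by (rule the_equality) (use p phi_uniq[OF assms] in auto)
  have "p \<noteq> 0" using p unfolding phi_def using assms by auto
  moreover have "p \<noteq> 1/2"
  proof
    assume "p = 1/2"
    with p have "phi u w R (1/2) = 0" by simp
    moreover have "w*(1-u) > 0" using assms by simp
    ultimately show False using phi_half[of u w R] by linarith
  qed
  ultimately show ?thesis using p eq by auto
qed

lemma proot_gt:
  assumes "0 < u" "u < 1" "0 < w" "w \<le> 1" "R > 1" "0 \<le> q" "q < 1/2" "phi u w R q > 0"
  shows "q < proot u w R"
proof -
  obtain p where p: "q \<le> p" "p \<le> 1/2" "phi u w R p = 0"
    using phi_exists_between[of u w q R] assms by auto
  have "p = proot u w R" using phi_uniq[OF assms(1-5), of p "proot u w R"] p proot_props[OF assms(1-5)] assms by auto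
  moreover have "p \<noteq> q" using p assms by auto
  ultimately show ?thesis using p by auto
qed

theorem mainTheorem2:
  fixes u w :: real
  assumes "0 < u" "u < 1" "0 < w" "w \<le> 1"
  shows "(\<forall>R > 1. \<exists>!p. p \<in> {0..1} \<and> phi u w R p = 0)
       \<and> strict_mono_on {1<..} (proot u w)
       \<and> ((proot u w) \<longlongrightarrow> 1/2) at_top"
proof (intro conjI)
  show "\<forall>R > 1. \<exists>!p. p \<in> {0..1} \<and> phi u w R p = 0"
  proof (intro allI impI)
    fix R :: real assume R: "R > 1"
    show "\<exists>!p. p \<in> {0..1} \<and> phi u w R p = 0"
      using proot_props[OF assms R] phi_uniq[OF assms R] by blast
  qed
  show "strict_mono_on {1<..} (proot u w)"
  proof (rule strict_mono_onI)
    fix r s :: real assume rs: "r \<in> {1<..}" "s \<in> {1<..}" "r < s"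
    let ?p = "proot u w r"
    have P: "0 < ?p" "?p < 1/2" "phi u w r ?p = 0" using proot_props[OF assms, of r] rs by auto
    have h: "u*w*?p*(1-2*?p) > 0" using P assms by simp
    have "phi u w s ?p = phi u w r ?p + (s - r) * (u*w*?p*(1-2*?p))"
      unfolding phi_split by (simp add: algebra_simps)
    also have "\<dots> > 0" using P h rs by simp
    finally show "?p < proot u w s" using proot_gt[OF assms, of s ?p] rs P by auto
  qed
  show "((proot u w) \<longlongrightarrow> 1/2) at_top"
  proof (rule order_tendstoI)
    fix b :: real assume "b > 1/2"
    show "\<forall>\<^sub>F R in at_top. proot u w R < b"
      using eventually_gt_at_top[of 1]
      by eventually_elim (use proot_props[OF assms] \<open>b > 1/2\<close> in force)
  next
    fix a :: real assume a: "a < 1/2"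
    define q where "q = max a (1/4)"
    have q: "0 \<le> q" "q < 1/2" "a \<le> q" using a unfolding q_def by auto
    define g where "g = 2*w*q^2 + (u*w - 2*u - 2*w)*q + u"
    define h where "h = u*w*q*(1-2*q)"
    have hpos: "h > 0" unfolding h_def using q assms unfolding q_def by auto
    show "\<forall>\<^sub>F R in at_top. a < proot u w R"
      using eventually_gt_at_top[of "max 1 (- g / h)"]
    proof eventually_elim
      case (elim R)
      have "-(g/h) < R" using elim by simp
      hence "-(g/h)*h < R*h" using hpos by (rule mult_strict_right_mono)
      moreover have "-(g/h)*h = -g" using hpos by simp
      ultimately have "- g < R * h" by simp
      hence "phi u w R q > 0" unfolding phi_split g_def h_def by simp
      hence "q < proot u w R" using proot_gt[OF assms, of R q] q elim by auto
      thus ?case using q by simp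
    qed
  qed
qed

end
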